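(* Let $\Gamma=\langle V,(w_u)_{u\in V},\alpha,\beta\rangle$ be a star celebrity game with $\beta>1$. For every Nash equilibrium $S$ of $\Gamma$ whose outcome graph $G[S]$ is a tree, $C(S)\le 2\,\mathrm{opt}(\Gamma)$.
   Context: A celebrity game $\Gamma=\langle V,(w_u)_{u\in V},\alpha,\beta\rangle$ consists of a set of players $V=\{1,\dots,n\}$, celebrity weights $w_u>0$, a link cost $\alpha>0$ and a critical distance $\beta$ with $1\le\beta\le n-1$. A strategy of player $u$ is a set $S_u\subseteq V\setminus\{u\}$; a strategy profile is $S=(S_1,\dots,S_n)$; its outcome graph $G[S]$ is the undirected graph on $V$ with edge set $\{\{u,v\}: u\in S_v\text{ or }v\in S_u\}$. With $d_G$ the graph distance (infinite between different connected components), the cost of player $u$ is $c_u(S)=\alpha|S_u|+\sum_{v:\,d_{G[S]}(u,v)>\beta}w_v$ and the social cost is $C(S)=\sum_{u\in V}c_u(S)$. $S$ is a Nash equilibrium (NE) if no player can strictly decrease its cost by changing only its own strategy; a graph is an NE graph if it equals $G[S]$ for some NE $S$. $\mathrm{opt}(\Gamma)=\min_S C(S)$. $\Gamma$ is a star celebrity game if it has an NE graph that is connected. *)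

theory Defs
  imports Main "HOL-Library.Extended_Nat"
begin

text \<open>Players are V = {1..n}. A strategy profile is S :: nat => nat set;
 S u is the set of players u buys links to. Only profiles with
 S u a subset of V - {u} for u in V are valid.\<close>

definition players :: "nat \<Rightarrow> nat set" where
  "players n = {1..n}"

definition valid_profile :: "nat \<Rightarrow> (nat \<Rightarrow> nat set) \<Rightarrow> bool" where
  "valid_profile n S \<longleftrightarrow> (\<forall>u\<in>players n. S u \<subseteq> players n - {u})"

definition adj :: "nat \<Rightarrow> (nat \<Rightarrow> nat set) \<Rightarrow> nat \<Rightarrow> nat \<Rightarrow> bool" where
  "adj n S u v \<longleftrightarrow> u \<in> players n \<and> v \<in> players n \<and> (u \<in> S v \<or> v \<in> S u)"

definition edges :: "nat \<Rightarrow> (nat \<Rightarrow> nat set) \<Rightarrow> nat set set" where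
  "edges n S = {{u, v} | u v. adj n S u v}"

definition gdist :: "nat \<Rightarrow> (nat \<Rightarrow> nat set) \<Rightarrow> nat \<Rightarrow> nat \<Rightarrow> enat" where
  "gdist n S u v =
     (if \<exists>k. (adj n S ^^ k) u v then enat (LEAST k. (adj n S ^^ k) u v) else \<infinity>)"

definition cost :: "nat \<Rightarrow> (nat \<Rightarrow> real) \<Rightarrow> real \<Rightarrow> nat \<Rightarrow> (nat \<Rightarrow> nat set) \<Rightarrow> nat \<Rightarrow> real" where
  "cost n w \<alpha> \<beta> S u =
     \<alpha> * real (card (S u)) + (\<Sum>v\<in>{v\<in>players n. gdist n S u v > enat \<beta>}. w v)"

definition social_cost :: "nat \<Rightarrow> (nat \<Rightarrow> real) \<Rightarrow> real \<Rightarrow> nat \<Rightarrow> (nat \<Rightarrow> nat set) \<Rightarrow> real" where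
  "social_cost n w \<alpha> \<beta> S = (\<Sum>u\<in>players n. cost n w \<alpha> \<beta> S u)"

definition is_NE :: "nat \<Rightarrow> (nat \<Rightarrow> real) \<Rightarrow> real \<Rightarrow> nat \<Rightarrow> (nat \<Rightarrow> nat set) \<Rightarrow> bool" where
  "is_NE n w \<alpha> \<beta> S \<longleftrightarrow> valid_profile n S \<and>
     (\<forall>u\<in>players n. \<forall>T. T \<subseteq> players n - {u} \<longrightarrow>
        cost n w \<alpha> \<beta> S u \<le> cost n w \<alpha> \<beta> (S(u := T)) u)"

definition opt :: "nat \<Rightarrow> (nat \<Rightarrow> real) \<Rightarrow> real \<Rightarrow> nat \<Rightarrow> real" where
  "opt n w \<alpha> \<beta> = (LEAST c. \<exists>S. valid_profile n S \<and> c = social_cost n w \<alpha> \<beta> S)"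

definition connected_graph :: "nat \<Rightarrow> (nat \<Rightarrow> nat set) \<Rightarrow> bool" where
  "connected_graph n S \<longleftrightarrow> (\<forall>u\<in>players n. \<forall>v\<in>players n. gdist n S u v \<noteq> \<infinity>)"

definition is_tree :: "nat \<Rightarrow> (nat \<Rightarrow> nat set) \<Rightarrow> bool" where
  "is_tree n S \<longleftrightarrow> connected_graph n S \<and> card (edges n S) = n - 1"

definition star_celebrity_game :: "nat \<Rightarrow> (nat \<Rightarrow> real) \<Rightarrow> real \<Rightarrow> nat \<Rightarrow> bool" where
  "star_celebrity_game n w \<alpha> \<beta> \<longleftrightarrow>
     (\<exists>S. is_NE n w \<alpha> \<beta> S \<and> connected_graph n S)"

end

theory Submission
  imports Defs "HOL-Library.FuncSet"
begin

definition dd :: "('a \<Rightarrow> 'a \<Rightarrow> bool) \<Rightarrow> 'a \<Rightarrow> 'a \<Rightarrow> nat" where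
  "dd R x y = (LEAST k. (R ^^ k) x y)"

definition dst :: "('a \<Rightarrow> 'a \<Rightarrow> bool) \<Rightarrow> 'a \<Rightarrow> 'a \<Rightarrow> enat" where
  "dst R x y = (if \<exists>k. (R ^^ k) x y then enat (LEAST k. (R ^^ k) x y) else \<infinity>)"

lemma gdist_dst: "gdist n S u v = dst (adj n S) u v"
  by (simp add: gdist_def dst_def)

lemma dd_le: "(R ^^ k) x y \<Longrightarrow> dd R x y \<le> k"
  unfolding dd_def by (rule Least_le)

lemma dd_path: "(R ^^ k) x y \<Longrightarrow> (R ^^ (dd R x y)) x y"
  unfolding dd_def by (rule LeastI)

lemma dd_refl[simp]: "dd R x x = 0"
  using dd_le[of 0 R x x] by simp

lemma dd_zero: "(R ^^ k) x y \<Longrightarrow> dd R x y = 0 \<Longrightarrow> x = y"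
  using dd_path[of k R x y] by simp

lemma dd_step: "R x y \<Longrightarrow> (R ^^ k) y z \<Longrightarrow> dd R x z \<le> dd R y z + 1"
proof -
  assume a: "R x y" "(R ^^ k) y z"
  have "(R ^^ Suc (dd R y z)) x z" using relpowp_Suc_I2[OF a(1) dd_path[OF a(2)]] .
  then show ?thesis using dd_le by fastforce
qed

lemma dd_Suc:
  assumes "dd R x z = Suc m" "(R ^^ k) x z"
  shows "\<exists>y. R x y \<and> dd R y z = m \<and> (R ^^ m) y z"
proof -
  have "(R ^^ Suc m) x z" using dd_path[OF assms(2)] assms(1) by simp
  then obtain y where y: "R x y" "(R ^^ m) y z" using relpowp_Suc_D2 by metis
  have "dd R y z \<le> m" using dd_le[OF y(2)] .
  moreover have "dd R x z \<le> dd R y z + 1" using dd_step[OF y] .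
  ultimately show ?thesis using y assms(1) by auto
qed

lemma pow_sym:
  assumes "\<And>x y. R x y \<Longrightarrow> R y x"
  shows "(R ^^ k) x y \<Longrightarrow> (R ^^ k) y x"
proof (induction k arbitrary: x y)
  case 0 then show ?case by simp
next
  case (Suc k)
  then obtain z where "R x z" "(R ^^ k) z y" using relpowp_Suc_D2 by metis
  then show ?case using Suc.IH assms relpowp_Suc_I by metis
qed

lemma dd_sym:
  assumes "\<And>x y. R x y \<Longrightarrow> R y x" "(R ^^ k) x y"
  shows "dd R x y = dd R y x"
proof -
  have a: "(R ^^ k) y x" using pow_sym[OF assms(1) assms(2)] .
  have "dd R x y \<le> dd R y x" using dd_le[OF pow_sym[OF assms(1) dd_path[OF a]]] .
  moreover have "dd R y x \<le> dd R x y" using dd_le[OF pow_sym[OF assms(1) dd_path[OF assms(2)]]] .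
  ultimately show ?thesis by simp
qed

lemma dst_fin: "(R ^^ k) x y \<Longrightarrow> dst R x y = enat (dd R x y)"
  unfolding dst_def dd_def by auto

lemma dst_le: "(R ^^ k) x y \<Longrightarrow> dst R x y \<le> enat k"
  using dst_fin[of k R x y] dd_le[of k R x y] by simp

lemma dst_refl[simp]: "dst R x x = 0"
  using dst_fin[of 0 R x x] by (simp add: zero_enat_def)

lemma dst_step: "R x y \<Longrightarrow> dst R x z \<le> eSuc (dst R y z)"
proof (cases "\<exists>k. (R ^^ k) y z")
  case True
  then obtain k where k: "(R ^^ k) y z" by blast
  assume r: "R x y"
  have "(R ^^ Suc k) x z" using relpowp_Suc_I2[OF r k] .
  then have "dst R x z = enat (dd R x z)" by (rule dst_fin)
  also have "\<dots> \<le> enat (dd R y z + 1)" using dd_step[OF r k] by simp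
  also have "\<dots> = eSuc (dst R y z)" using dst_fin[OF k] by (simp add: eSuc_enat)
  finally show ?thesis .
next
  case False
  then show ?thesis by (simp add: dst_def)
qed

lemma dst_mono:
  assumes "\<And>x y. R x y \<Longrightarrow> R' x y"
  shows "dst R' x y \<le> dst R x y"
proof (cases "\<exists>k. (R ^^ k) x y")
  case True
  then obtain k where k: "(R ^^ k) x y" by blast
  have "(R ^^ dd R x y) x y" using dd_path[OF k] .
  then have "(R' ^^ dd R x y) x y" using relpowp_mono[of R R'] assms by blast
  then have "dst R' x y \<le> enat (dd R x y)" by (rule dst_le)
  then show ?thesis using dst_fin[OF k] by simp
next
  case False
  then show ?thesis by (simp add: dst_def)
qed


lemma dd_adj: "R x y \<Longrightarrow> dd R x y \<le> 1"
proof -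
  assume "R x y"
  then have "(R ^^ 1) x y" by (simp only: relpowp_1)
  then show ?thesis by (rule dd_le)
qed

lemma LR:
  assumes sym: "\<And>x y. R x y \<Longrightarrow> R y x" and leaf: "\<And>z. R l z \<Longrightarrow> z = q"
    and R': "\<And>x y. R' x y \<longleftrightarrow> R x y \<and> x \<noteq> l \<and> y \<noteq> l"
  shows "(R ^^ k) x y \<Longrightarrow> x \<noteq> l \<Longrightarrow> y \<noteq> l \<Longrightarrow> \<exists>j\<le>k. (R' ^^ j) x y"
proof (induction k arbitrary: x rule: less_induct)
  case (less k)
  show ?case
  proof (cases k)
    case 0 then show ?thesis using less.prems by auto
  next
    case (Suc m)
    then obtain z where z: "R x z" "(R ^^ m) z y" using less.prems(1) relpowp_Suc_D2 by metis
    show ?thesis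
    proof (cases "z = l")
      case False
      then obtain j where j: "j \<le> m" "(R' ^^ j) z y" using less.IH[of m z] Suc z less.prems by auto
      have "R' x z" using R' z(1) False less.prems by auto
      then have "(R' ^^ Suc j) x y" using relpowp_Suc_I2 j(2) by metis
      then show ?thesis using j Suc by (intro exI[of _ "Suc j"]) simp
    next
      case True
      have "m \<noteq> 0"
      proof
        assume "m = 0"
        then have "z = y" using z(2) by simp
        then show False using True less.prems by simp
      qed
      then obtain m' where m': "m = Suc m'" by (cases m) auto
      then obtain z' where z': "R l z'" "(R ^^ m') z' y" using z True relpowp_Suc_D2 by metis
      have "z' = q" using leaf z'(1) .
      moreover have "x = q" using leaf sym z(1) True by blast
      ultimately have "(R ^^ m') x y" using z' by simp
      then obtain j where j: "j \<le> m'" "(R' ^^ j) x y" using less.IH[of m' x] Suc m' less.prems by auto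
      then show ?thesis using Suc m' by (intro exI[of _ j]) simp
    qed
  qed
qed

lemma dst_LR:
  assumes sym: "\<And>x y. R x y \<Longrightarrow> R y x" and leaf: "\<And>z. R l z \<Longrightarrow> z = q"
    and R': "\<And>x y. R' x y \<longleftrightarrow> R x y \<and> x \<noteq> l \<and> y \<noteq> l"
    and "x \<noteq> l" "y \<noteq> l"
  shows "dst R' x y \<le> dst R x y"
proof (cases "\<exists>k. (R ^^ k) x y")
  case True
  then obtain k where k: "(R ^^ k) x y" by blast
  obtain j where "j \<le> dd R x y" "(R' ^^ j) x y"
    using LR[OF sym leaf R' dd_path[OF k]] assms(4,5) by blast
  then have "dst R' x y \<le> enat (dd R x y)" using dst_le[of j R' x y] by (meson enat_ord_simps(1) order_trans)
  then show ?thesis using dst_fin[OF k] by simp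
next
  case False then show ?thesis by (simp add: dst_def)
qed

locale ugraph =
  fixes V :: "'a set" and R :: "'a \<Rightarrow> 'a \<Rightarrow> bool"
  assumes finV: "finite V"
    and symR: "\<And>x y. R x y \<Longrightarrow> R y x"
    and inV: "\<And>x y. R x y \<Longrightarrow> x \<in> V \<and> y \<in> V"
    and irr: "\<And>x. \<not> R x x"
begin

definition E where "E = {{x, y} | x y. R x y}"

lemma finE: "finite E"
proof -
  have "E \<subseteq> Pow V" unfolding E_def using inV by auto
  then show ?thesis using finV finite_subset by (metis finite_Pow_iff)
qed

definition Re where "Re r = {u. u \<noteq> r \<and> (\<exists>k. (R ^^ k) r u)}"

lemma par_exists:
  assumes "u \<in> Re r"
  shows "\<exists>p. R u p \<and> dd R r p + 1 = dd R r u \<and> (\<exists>k. (R ^^ k) r p)"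
proof -
  obtain k where k: "(R ^^ k) r u" and ne: "u \<noteq> r" using assms unfolding Re_def by auto
  have pth: "(R ^^ dd R r u) r u" using dd_path[OF k] .
  have "dd R r u \<noteq> 0" using dd_zero[OF k] ne by auto
  then obtain m where m: "dd R r u = Suc m" by (cases "dd R r u") auto
  then have "(R ^^ Suc m) r u" using pth by simp
  then obtain p where p: "(R ^^ m) r p" "R p u" by (metis relpowp_Suc_E)
  have "dd R r p \<le> m" using dd_le[OF p(1)] .
  moreover have "dd R r u \<le> dd R r p + 1"
  proof -
    have "(R ^^ Suc (dd R r p)) r u" using relpowp_Suc_I[OF dd_path[OF p(1)] p(2)] .
    then show ?thesis using dd_le by fastforce
  qed
  ultimately have "dd R r p + 1 = dd R r u" using m by simp
  then show ?thesis using p symR by blast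
qed

lemma Re_sub: "Re r \<subseteq> V"
proof
  fix u assume "u \<in> Re r"
  then obtain k where k: "(R ^^ k) r u" "u \<noteq> r" unfolding Re_def by auto
  then have "k \<noteq> 0" by (cases k) auto
  then obtain j where "k = Suc j" by (cases k) auto
  then obtain p where "R p u" using k(1) by (metis relpowp_Suc_E)
  then show "u \<in> V" using inV by auto
qed

lemma finRe: "finite (Re r)" using Re_sub finV finite_subset by blast

definition par where "par r u = (SOME p. R u p \<and> dd R r p + 1 = dd R r u \<and> (\<exists>k. (R ^^ k) r p))"

lemma par_prop:
  assumes "u \<in> Re r"
  shows "R u (par r u)" "dd R r (par r u) + 1 = dd R r u" "\<exists>k. (R ^^ k) r (par r u)"
  using someI_ex[OF par_exists[OF assms]] unfolding par_def by auto

lemma par_inj: "inj_on (\<lambda>u. {u, par r u}) (Re r)"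
proof (rule inj_onI)
  fix u v assume u: "u \<in> Re r" and v: "v \<in> Re r" and eq: "{u, par r u} = {v, par r v}"
  show "u = v"
  proof (rule ccontr)
    assume "u \<noteq> v"
    then have "u = par r v" "v = par r u" using eq by (auto simp: doubleton_eq_iff)
    then show False using par_prop(2)[OF u] par_prop(2)[OF v] by simp
  qed
qed

lemma par_img: "(\<lambda>u. {u, par r u}) ` (Re r) \<subseteq> E"
  unfolding E_def using par_prop(1) by blast

lemma card_Re: "card (Re r) \<le> card E"
  using card_inj_on_le[OF par_inj par_img finE] .

end

locale tree = ugraph +
  assumes conn: "\<And>x y. x \<in> V \<Longrightarrow> y \<in> V \<Longrightarrow> \<exists>k. (R ^^ k) x y"
    and cardE: "card E = card V - 1"
begin

lemma Re_eq: "r \<in> V \<Longrightarrow> Re r = V - {r}"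
proof -
  assume r: "r \<in> V"
  have "Re r \<subseteq> V - {r}"
  proof
    fix u assume "u \<in> Re r"
    then obtain k where k: "(R ^^ k) r u" "u \<noteq> r" unfolding Re_def by auto
    then have "k \<noteq> 0" by (cases k) auto
    then obtain j where "k = Suc j" by (cases k) auto
    then obtain p where "R p u" using k(1) by (metis relpowp_Suc_E)
    then show "u \<in> V - {r}" using inV k(2) by auto
  qed
  moreover have "V - {r} \<subseteq> Re r" unfolding Re_def using conn r by auto
  ultimately show ?thesis by auto
qed

lemma par_img_eq:
  assumes r: "r \<in> V"
  shows "(\<lambda>u. {u, par r u}) ` (Re r) = E"
proof -
  have "card ((\<lambda>u. {u, par r u}) ` (Re r)) = card (Re r)"
    using card_image[OF par_inj] .
  also have "\<dots> = card E" using Re_eq[OF r] cardE finV r by simp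
  finally show ?thesis using card_subset_eq[OF finE par_img] by simp
qed

lemma P:
  assumes r: "r \<in> V" and ru: "R u q" and le: "dd R r q \<le> dd R r u"
  shows "dd R r q + 1 = dd R r u \<and> (\<forall>q'. R u q' \<and> dd R r q' \<le> dd R r u \<longrightarrow> q' = q)"
proof -
  have key: "q' = par r u \<and> u \<in> Re r" if ru': "R u q'" and le': "dd R r q' \<le> dd R r u" for q'
  proof -
    have "{u, q'} \<in> E" unfolding E_def using ru' by blast
    then obtain x where x: "x \<in> Re r" "{u, q'} = {x, par r x}" using par_img_eq[OF r] by blast
    have "u \<noteq> q'" using ru' irr by auto
    then have "(x = u \<and> par r x = q') \<or> (x = q' \<and> par r x = u)" using x(2) by (auto simp: doubleton_eq_iff)
    then show ?thesis
    proof
      assume h: "x = q' \<and> par r x = u"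
      then have "dd R r u + 1 = dd R r q'" using par_prop(2)[OF x(1)] by (metis (no_types))
      then show ?thesis using le' by simp
    next
      assume "x = u \<and> par r x = q'"
      then show ?thesis using x(1) by blast
    qed
  qed
  from key[OF ru le] have "q = par r u" "u \<in> Re r" by auto
  then have "dd R r q + 1 = dd R r u" using par_prop(2) by simp
  moreover have "\<forall>q'. R u q' \<and> dd R r q' \<le> dd R r u \<longrightarrow> q' = q" using key \<open>q = par r u\<close> by blast
  ultimately show ?thesis by blast
qed

lemma P1:
  assumes r: "r \<in> V" and ru: "R u q"
  shows "dd R r q + 1 = dd R r u \<or> dd R r u + 1 = dd R r q"
proof (cases "dd R r q \<le> dd R r u")
  case True then show ?thesis using P[OF r ru] by blast
next
  case False then show ?thesis using P[OF r symR[OF ru]] by simp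
qed

lemma reach: "x \<in> V \<Longrightarrow> y \<in> V \<Longrightarrow> (R ^^ dd R x y) x y"
proof -
  assume "x \<in> V" "y \<in> V"
  then obtain k where "(R ^^ k) x y" using conn by blast
  then show ?thesis by (rule dd_path)
qed

lemma dsym: "x \<in> V \<Longrightarrow> y \<in> V \<Longrightarrow> dd R x y = dd R y x"
proof -
  assume "x \<in> V" "y \<in> V"
  then obtain k where "(R ^^ k) x y" using conn by blast
  then show ?thesis using dd_sym[of R] symR by blast
qed

lemma dstep: "R x y \<Longrightarrow> z \<in> V \<Longrightarrow> dd R x z \<le> dd R y z + 1"
proof -
  assume a: "R x y" "z \<in> V"
  then obtain k where "(R ^^ k) y z" using conn inV by blast
  then show ?thesis using dd_step[of R x y k z] a(1) by blast
qed

lemma dSuc: "x \<in> V \<Longrightarrow> z \<in> V \<Longrightarrow> dd R x z = Suc m \<Longrightarrow> \<exists>y. R x y \<and> dd R y z = m"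
proof -
  assume a: "x \<in> V" "z \<in> V" "dd R x z = Suc m"
  then obtain k where "(R ^^ k) x z" using conn by blast
  then show ?thesis using dd_Suc[OF a(3)] by blast
qed

lemma d0: "x \<in> V \<Longrightarrow> y \<in> V \<Longrightarrow> dd R x y = 0 \<longleftrightarrow> x = y"
proof -
  assume a: "x \<in> V" "y \<in> V"
  then obtain k where "(R ^^ k) x y" using conn by blast
  then show ?thesis using dd_zero[of k R x y] by auto
qed

lemma L1:
  assumes lq: "R l q" and leaf: "\<And>z. R l z \<Longrightarrow> z = q" and y: "y \<in> V" "y \<noteq> l"
  shows "dd R l y = dd R q y + 1"
proof -
  have l: "l \<in> V" using inV lq by blast
  have "dd R l y \<noteq> 0" using d0[OF l y(1)] y(2) by simp
  then obtain m where m: "dd R l y = Suc m" by (cases "dd R l y") auto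
  then obtain z where "R l z" "dd R z y = m" using dSuc[OF l y(1)] by blast
  then show ?thesis using leaf m by auto
qed

lemma G:
  assumes r: "r \<in> V" and ab: "R a b" and rb: "dd R r b = dd R r a + 1"
    and c: "c \<in> V" and ac: "dd R a c = dd R b c + 1"
  shows "dd R r c = dd R r a + dd R a c"
  using ab rb ac
proof (induction "dd R b c" arbitrary: a b)
  case 0
  have "b \<in> V" using inV 0 by blast
  then have "b = c" using d0[of b c] c 0 by simp
  then show ?case using 0 by simp
next
  case (Suc m)
  have bV: "b \<in> V" using inV Suc.prems(1) by blast
  obtain b' where b': "R b b'" "dd R b' c = m" using dSuc[OF bV c Suc.hyps(2)[symmetric]] by blast
  have "dd R r b' = dd R r b + 1"
  proof -
    have "dd R r b' + 1 = dd R r b \<or> dd R r b + 1 = dd R r b'" using P1[OF r b'(1)] .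
    moreover have "dd R r b' + 1 \<noteq> dd R r b"
    proof
      assume h: "dd R r b' + 1 = dd R r b"
      have "R b a" using symR Suc.prems(1) by blast
      then have "a = b'" using P[OF r b'(1)] h Suc.prems(2) by auto
      then show False using Suc.prems(3) b'(2) Suc.hyps(2) by simp
    qed
    ultimately show ?thesis by simp
  qed
  moreover have "dd R b c = dd R b' c + 1" using b'(2) Suc.hyps(2) by simp
  ultimately have "dd R r c = dd R r b + dd R b c" using Suc.hyps(1)[OF b'(2)[symmetric] b'(1)] b'(2) by simp
  then show ?case using Suc.prems by simp
qed

end

lemma fin_players[simp]: "finite (players n)" by (simp add: players_def)
lemma card_players[simp]: "card (players n) = n" by (simp add: players_def)

lemma adj_sym: "adj n S x y \<Longrightarrow> adj n S y x" by (auto simp: adj_def)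
lemma adj_inV: "adj n S x y \<Longrightarrow> x \<in> players n \<and> y \<in> players n" by (auto simp: adj_def)
lemma adj_irr: "valid_profile n S \<Longrightarrow> \<not> adj n S x x"
  by (auto simp: adj_def valid_profile_def)

lemma ugraph_adj: "valid_profile n S \<Longrightarrow> ugraph (players n) (adj n S)"
  unfolding ugraph_def using adj_sym adj_inV adj_irr by auto

lemma edges_E: "valid_profile n S \<Longrightarrow> edges n S = ugraph.E (adj n S)"
  by (simp add: edges_def ugraph.E_def[OF ugraph_adj])

lemma finS: "valid_profile n S \<Longrightarrow> u \<in> players n \<Longrightarrow> finite (S u)"
  unfolding valid_profile_def by (meson fin_players finite_Diff finite_subset)

lemma NE_dev: "is_NE n w \<alpha> \<beta> S \<Longrightarrow> u \<in> players n \<Longrightarrow> T \<subseteq> players n - {u} \<Longrightarrow>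
   cost n w \<alpha> \<beta> S u \<le> cost n w \<alpha> \<beta> (S(u := T)) u"
  unfolding is_NE_def by blast

lemma no_double:
  assumes ne: "is_NE n w \<alpha> \<beta> S" and a: "\<alpha> > 0" and u: "u \<in> players n" and v: "v \<in> S u"
  shows "u \<notin> S v"
proof
  assume uv: "u \<in> S v"
  have val: "valid_profile n S" using ne is_NE_def by blast
  have vu: "v \<noteq> u" using val u v unfolding valid_profile_def by auto
  define T where "T = S u - {v}"
  have T: "T \<subseteq> players n - {u}" using val u unfolding T_def valid_profile_def by auto
  have adjeq: "adj n (S(u := T)) = adj n S"
    using uv vu unfolding adj_def T_def fun_eq_iff by auto
  have "cost n w \<alpha> \<beta> S u \<le> cost n w \<alpha> \<beta> (S(u := T)) u" using NE_dev[OF ne u T] .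
  moreover have "card T = card (S u) - 1" unfolding T_def using v finS[OF val u] by simp
  moreover have "card (S u) \<ge> 1" using v finS[OF val u] by (metis One_nat_def Suc_leI card_gt_0_iff empty_iff)
  ultimately show False using a unfolding cost_def gdist_def adjeq
    by (simp add: of_nat_diff algebra_simps)
qed

lemma sum_links_ge:
  assumes val: "valid_profile n S"
  shows "card (edges n S) \<le> (\<Sum>u\<in>players n. card (S u))"
proof -
  have "card (Sigma (players n) S) = (\<Sum>u\<in>players n. card (S u))"
    using card_SigmaI[of "players n" S] finS[OF val] by simp
  moreover have "edges n S \<subseteq> (\<lambda>(u, v). {u, v}) ` Sigma (players n) S"
    unfolding edges_def adj_def by (auto simp: insert_commute)
  moreover have "finite (Sigma (players n) S)" using finS[OF val] by simp
  ultimately show ?thesis using card_image_le surj_card_le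
    by (metis (no_types, lifting) card_mono finite_imageI le_trans)
qed

lemma sum_links_eq:
  assumes ne: "is_NE n w \<alpha> \<beta> S" and a: "\<alpha> > 0"
  shows "card (edges n S) = (\<Sum>u\<in>players n. card (S u))"
proof -
  have val: "valid_profile n S" using ne is_NE_def by blast
  have "card (Sigma (players n) S) = (\<Sum>u\<in>players n. card (S u))"
    using card_SigmaI[of "players n" S] finS[OF val] by simp
  moreover have "edges n S = (\<lambda>(u, v). {u, v}) ` Sigma (players n) S"
  proof
    show "edges n S \<subseteq> (\<lambda>(u, v). {u, v}) ` Sigma (players n) S"
      unfolding edges_def adj_def by (auto simp: insert_commute)
    show "(\<lambda>(u, v). {u, v}) ` Sigma (players n) S \<subseteq> edges n S"
    proof
      fix e assume "e \<in> (\<lambda>(u, v). {u, v}) ` Sigma (players n) S"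
      then obtain u v where "u \<in> players n" "v \<in> S u" "e = {u, v}" by auto
      moreover then have "v \<in> players n" using val unfolding valid_profile_def by auto
      ultimately show "e \<in> edges n S" unfolding edges_def adj_def by blast
    qed
  qed
  moreover have "inj_on (\<lambda>(u, v). {u, v}) (Sigma (players n) S)"
  proof (rule inj_onI)
    fix p q assume p: "p \<in> Sigma (players n) S" and q: "q \<in> Sigma (players n) S"
      and eq: "(\<lambda>(u, v). {u, v}) p = (\<lambda>(u, v). {u, v}) q"
    obtain u v where pu: "p = (u, v)" "u \<in> players n" "v \<in> S u" using p by auto
    obtain u' v' where qu: "q = (u', v')" "u' \<in> players n" "v' \<in> S u'" using q by auto
    have e: "{u, v} = {u', v'}" using eq pu qu by simp
    show "p = q"
    proof (cases "u = u'")
      case True then show ?thesis using e pu qu by (auto simp: doubleton_eq_iff)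
    next
      case False
      then have "u = v'" "v = u'" using e by (auto simp: doubleton_eq_iff)
      then show ?thesis using no_double[OF ne a pu(2) pu(3)] qu by simp
    qed
  qed
  ultimately show ?thesis using card_image by metis
qed


lemma g_step: "adj n S x y \<Longrightarrow> gdist n S x z \<le> eSuc (gdist n S y z)"
  unfolding gdist_dst by (rule dst_step[where R="adj n S"])

lemma g_mono: "(\<And>p q. adj n S p q \<Longrightarrow> adj n S' p q) \<Longrightarrow> gdist n S' x y \<le> gdist n S x y"
  unfolding gdist_dst by (rule dst_mono[where R="adj n S"])

lemma adj_cong: "(\<And>u. u \<in> players n \<Longrightarrow> S1 u = S2 u) \<Longrightarrow> adj n S1 = adj n S2"
  unfolding adj_def fun_eq_iff by auto

lemma sc_cong:
  assumes "\<And>u. u \<in> players n \<Longrightarrow> S1 u = S2 u"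
  shows "social_cost n w \<alpha> \<beta> S1 = social_cost n w \<alpha> \<beta> S2"
proof -
  have "adj n S1 = adj n S2" by (rule adj_cong) (rule assms)
  then show ?thesis unfolding social_cost_def cost_def gdist_def using assms
    by (intro sum.cong) auto
qed

lemma opt_ge:
  assumes "\<And>S'. valid_profile n S' \<Longrightarrow> c0 \<le> social_cost n w \<alpha> \<beta> S'"
  shows "c0 \<le> opt n w \<alpha> \<beta>"
proof -
  define C where "C = {c. \<exists>S'. valid_profile n S' \<and> c = social_cost n w \<alpha> \<beta> S'}"
  have "C \<subseteq> (social_cost n w \<alpha> \<beta>) ` (PiE (players n) (\<lambda>_. Pow (players n)))"
  proof
    fix c assume "c \<in> C"
    then obtain S' where S': "valid_profile n S'" "c = social_cost n w \<alpha> \<beta> S'" unfolding C_def by blast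
    have "restrict S' (players n) \<in> PiE (players n) (\<lambda>_. Pow (players n))"
      using S'(1) unfolding valid_profile_def by (auto simp: restrict_PiE_iff)
    moreover have "social_cost n w \<alpha> \<beta> (restrict S' (players n)) = c"
      using S'(2) sc_cong[of n "restrict S' (players n)" S'] by simp
    ultimately show "c \<in> (social_cost n w \<alpha> \<beta>) ` (PiE (players n) (\<lambda>_. Pow (players n)))" by force
  qed
  then have fin: "finite C" by (rule finite_subset) (intro finite_imageI finite_PiE; simp)
  have "valid_profile n (\<lambda>_. {})" by (simp add: valid_profile_def)
  then have ne: "C \<noteq> {}" unfolding C_def by blast
  have "opt n w \<alpha> \<beta> = Min C"
    unfolding opt_def
    apply (rule Least_equality)
    using Min_in[OF fin ne] apply (simp add: C_def)
    using Min_le[OF fin] unfolding C_def by blast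
  moreover have "Min C \<in> C" using Min_in[OF fin ne] .
  ultimately show ?thesis using assms unfolding C_def by auto
qed

lemma far_small:
  assumes val: "valid_profile n S" and v: "v \<in> players n"
  shows "card {u \<in> players n. \<not> gdist n S u v > enat \<beta>} \<le> 1 + card (edges n S)"
proof -
  interpret ugraph "players n" "adj n S" using ugraph_adj[OF val] .
  have "{u \<in> players n. \<not> gdist n S u v > enat \<beta>} \<subseteq> insert v (Re v)"
  proof
    fix u assume u: "u \<in> {u \<in> players n. \<not> gdist n S u v > enat \<beta>}"
    then have "\<exists>k. (adj n S ^^ k) u v" unfolding gdist_def by (auto split: if_splits)
    then have "\<exists>k. (adj n S ^^ k) v u" using pow_sym[of "adj n S"] adj_sym by metis
    then show "u \<in> insert v (Re v)" unfolding Re_def by auto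
  qed
  moreover have "finite (Re v)" by (rule finRe)
  ultimately have "card {u \<in> players n. \<not> gdist n S u v > enat \<beta>} \<le> card (insert v (Re v))"
    by (simp add: card_mono)
  also have "\<dots> \<le> 1 + card (Re v)" by (simp add: card_insert_if finRe)
  also have "\<dots> \<le> 1 + card (edges n S)" using card_Re edges_E[OF val] by simp
  finally show ?thesis .
qed


lemma lower_sc:
  assumes val: "valid_profile n S" and pos: "\<forall>u\<in>players n. w u > 0"
    and aW: "\<alpha> \<le> (\<Sum>v\<in>players n. w v)" and a: "\<alpha> \<ge> 0"
  shows "\<alpha> * (real n - 1) \<le> social_cost n w \<alpha> \<beta> S"
proof -
  define V where "V = players n"
  define P where "P u v = (gdist n S u v > enat \<beta>)" for u v
  define E where "E = card (edges n S)"
  define L where "L = (\<Sum>u\<in>V. card (S u))"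
  define W where "W = (\<Sum>v\<in>V. w v)"
  have finV: "finite V" by (simp add: V_def)
  have sc: "social_cost n w \<alpha> \<beta> S = \<alpha> * real L + (\<Sum>u\<in>V. \<Sum>v\<in>{v\<in>V. P u v}. w v)"
    unfolding social_cost_def cost_def L_def V_def P_def
    by (simp add: sum.distrib sum_distrib_left)
  have swap: "(\<Sum>u\<in>V. \<Sum>v\<in>{v\<in>V. P u v}. w v) = (\<Sum>v\<in>V. w v * real (card {u\<in>V. P u v}))"
  proof -
    have "(\<Sum>u\<in>V. \<Sum>v\<in>{v\<in>V. P u v}. w v) = (\<Sum>u\<in>V. \<Sum>v\<in>V. if P u v then w v else 0)"
      using finV by (simp add: sum.inter_filter)
    also have "\<dots> = (\<Sum>v\<in>V. \<Sum>u\<in>V. if P u v then w v else 0)" by (rule sum.swap)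
    also have "\<dots> = (\<Sum>v\<in>V. w v * real (card {u\<in>V. P u v}))"
    proof (rule sum.cong[OF refl])
      fix v
      have "(\<Sum>u\<in>V. if P u v then w v else 0) = (\<Sum>u\<in>{u\<in>V. P u v}. w v)"
        using finV by (rule sum.inter_filter[symmetric])
      also have "\<dots> = w v * real (card {u\<in>V. P u v})" by (simp add: mult.commute)
      finally show "(\<Sum>u\<in>V. if P u v then w v else 0) = w v * real (card {u\<in>V. P u v})" .
    qed
    finally show ?thesis .
  qed
  have cnt: "real (card {u\<in>V. P u v}) \<ge> real n - 1 - real E" if v: "v \<in> V" for v
  proof -
    have "card V = card {u\<in>V. P u v} + card {u\<in>V. \<not> P u v}"
      using finV by (subst card_Un_disjoint[symmetric]) (auto intro: arg_cong[where f=card])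
    moreover have "card {u\<in>V. \<not> P u v} \<le> 1 + E"
      using far_small[OF val, of v \<beta>] v unfolding V_def P_def E_def by simp
    moreover have "card V = n" by (simp add: V_def)
    ultimately show ?thesis by linarith
  qed
  have F1: "(\<Sum>v\<in>V. w v * real (card {u\<in>V. P u v})) \<ge> W * (real n - 1 - real E)"
  proof -
    have "(\<Sum>v\<in>V. w v * real (card {u\<in>V. P u v})) \<ge> (\<Sum>v\<in>V. w v * (real n - 1 - real E))"
      by (rule sum_mono) (use cnt pos V_def in \<open>auto intro: mult_left_mono\<close>)
    then show ?thesis unfolding W_def by (simp add: sum_distrib_right)
  qed
  have F0: "(\<Sum>v\<in>V. w v * real (card {u\<in>V. P u v})) \<ge> 0"
    by (rule sum_nonneg) (use pos V_def in \<open>auto\<close>)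
  have LE: "real E \<le> real L" using sum_links_ge[OF val] unfolding E_def L_def V_def by (simp only: of_nat_le_iff)
  have aW': "\<alpha> \<le> W" using aW unfolding W_def V_def .
  show ?thesis
  proof (cases "real E \<le> real n - 1")
    case True
    have "\<alpha> * (real n - 1 - real E) \<le> W * (real n - 1 - real E)"
      using aW' True by (intro mult_right_mono) auto
    moreover have "\<alpha> * real E \<le> \<alpha> * real L" using LE a by (intro mult_left_mono)
    ultimately show ?thesis using sc swap F1 by (simp add: algebra_simps)
  next
    case False
    have "\<alpha> * (real n - 1) \<le> \<alpha> * real L" using LE a False by (intro mult_left_mono) auto
    then show ?thesis using sc swap F0 by simp
  qed
qed

lemma alpha_le_W:
  assumes ne: "is_NE n w \<alpha> \<beta> S" and pos: "\<forall>u\<in>players n. w u > 0"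
    and u: "u \<in> players n" and v: "v \<in> S u"
  shows "\<alpha> \<le> (\<Sum>x\<in>players n. w x)"
proof -
  have val: "valid_profile n S" using ne is_NE_def by blast
  define T where "T = S u - {v}"
  have T: "T \<subseteq> players n - {u}" using val u unfolding T_def valid_profile_def by auto
  have c: "cost n w \<alpha> \<beta> S u \<le> cost n w \<alpha> \<beta> (S(u := T)) u" using NE_dev[OF ne u T] .
  have cT: "card T = card (S u) - 1" unfolding T_def using v finS[OF val u] by simp
  have c1: "card (S u) \<ge> 1" using v finS[OF val u] by (metis One_nat_def Suc_leI card_gt_0_iff empty_iff)
  have f1: "(\<Sum>x\<in>{x\<in>players n. gdist n (S(u := T)) u x > enat \<beta>}. w x) \<le> (\<Sum>x\<in>players n. w x)"
    by (rule sum_mono2) (use pos in auto)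
  have f0: "(\<Sum>x\<in>{x\<in>players n. gdist n S u x > enat \<beta>}. w x) \<ge> 0"
    by (rule sum_nonneg) (use pos in auto)
  show ?thesis using c f1 f0 cT c1 unfolding cost_def by (simp add: of_nat_diff algebra_simps)
qed

locale game =
  fixes n w \<alpha> \<beta> S
  assumes ne: "is_NE n w \<alpha> \<beta> S" and tr: "is_tree n S" and b2: "\<beta> \<ge> 2"
    and pos: "\<forall>u\<in>players n. w u > 0" and a: "\<alpha> > 0"
begin

abbreviation "V \<equiv> players n"
abbreviation "A \<equiv> adj n S"

lemma val: "valid_profile n S" using ne is_NE_def by blast

lemma connA: "x \<in> V \<Longrightarrow> y \<in> V \<Longrightarrow> \<exists>k. (A ^^ k) x y"
  using tr unfolding is_tree_def connected_graph_def gdist_def by (auto split: if_splits)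

sublocale tree V A
proof -
  interpret ugraph V A using ugraph_adj[OF val] .
  show "tree V A"
    by unfold_locales (use connA tr edges_E[OF val] in \<open>auto simp: is_tree_def\<close>)
qed

lemma gd: "x \<in> V \<Longrightarrow> y \<in> V \<Longrightarrow> gdist n S x y = enat (dd A x y)"
  using connA dst_fin gdist_dst by metis

lemma wpos: "x \<in> V \<Longrightarrow> w x \<ge> 0" using pos by force

lemma add_link:
  assumes u: "u \<in> V" and x: "x \<in> V" "x \<noteq> u" "x \<notin> S u"
  shows "(\<Sum>v\<in>{v\<in>V. dd A u v > \<beta>}. w v) \<le> \<alpha> + (\<Sum>v\<in>{v\<in>V. dd A u v > \<beta> \<and> dd A x v \<ge> \<beta>}. w v)"
proof -
  define T where "T = insert x (S u)"
  define S' where "S' = S(u := T)"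
  have T: "T \<subseteq> V - {u}" using val u x unfolding T_def valid_profile_def by auto
  have c: "cost n w \<alpha> \<beta> S u \<le> cost n w \<alpha> \<beta> S' u" using NE_dev[OF ne u T] S'_def by simp
  have mono: "\<And>p q. A p q \<Longrightarrow> adj n S' p q" unfolding adj_def S'_def T_def by auto
  have ux: "adj n S' u x" unfolding adj_def S'_def T_def using u x by auto
  have sub: "{v\<in>V. gdist n S' u v > enat \<beta>} \<subseteq> {v\<in>V. dd A u v > \<beta> \<and> dd A x v \<ge> \<beta>}"
  proof
    fix v assume "v \<in> {v\<in>V. gdist n S' u v > enat \<beta>}"
    then have v: "v \<in> V" "gdist n S' u v > enat \<beta>" by auto
    have "gdist n S' u v \<le> gdist n S u v" by (rule g_mono) (rule mono)
    then have "enat \<beta> < enat (dd A u v)" using v gd[OF u v(1)] by (metis order_less_le_trans)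
    then have 1: "dd A u v > \<beta>" by simp
    have "gdist n S' u v \<le> eSuc (gdist n S' x v)" by (rule g_step[OF ux])
    also have "\<dots> \<le> eSuc (gdist n S x v)" using g_mono[where S=S and S'=S' and x=x and y=v] mono by simp
    also have "\<dots> = enat (Suc (dd A x v))" using gd[OF x(1) v(1)] by (simp add: eSuc_enat)
    finally have "enat \<beta> < enat (Suc (dd A x v))" using v(2) by (metis order_less_le_trans)
    then have "dd A x v \<ge> \<beta>" by simp
    then show "v \<in> {v\<in>V. dd A u v > \<beta> \<and> dd A x v \<ge> \<beta>}" using 1 v by simp
  qed
  have s1: "(\<Sum>v\<in>{v\<in>V. gdist n S' u v > enat \<beta>}. w v) \<le> (\<Sum>v\<in>{v\<in>V. dd A u v > \<beta> \<and> dd A x v \<ge> \<beta>}. w v)"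
    by (rule sum_mono2) (use sub wpos in auto)
  have cT: "card T = card (S u) + 1" unfolding T_def using x finS[OF val u] by simp
  have farS: "{v\<in>V. gdist n S u v > enat \<beta>} = {v\<in>V. dd A u v > \<beta>}" using gd[OF u] by auto
  have "cost n w \<alpha> \<beta> S' u = \<alpha> * real (card (S u) + 1) + (\<Sum>v\<in>{v\<in>V. gdist n S' u v > enat \<beta>}. w v)"
    unfolding cost_def S'_def using cT by simp
  moreover have "cost n w \<alpha> \<beta> S u = \<alpha> * real (card (S u)) + (\<Sum>v\<in>{v\<in>V. dd A u v > \<beta>}. w v)"
    unfolding cost_def using farS by simp
  ultimately show ?thesis using c s1 by (simp add: algebra_simps)
qed


lemma sum_insert_le: "finite F \<Longrightarrow> l \<in> V \<Longrightarrow> F \<subseteq> V \<Longrightarrow> (\<Sum>v\<in>insert l F. w v) \<le> w l + (\<Sum>v\<in>F. w v)"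
  by (cases "l \<in> F") (auto simp: insert_absorb wpos)

lemma leaf_drop:
  assumes lq: "A l q" and leaf: "\<And>z. A l z \<Longrightarrow> z = q" and lS: "l \<in> S q"
  shows "\<alpha> \<le> w l"
proof -
  have l: "l \<in> V" and q: "q \<in> V" using lq adj_inV by auto
  have hnd: "q \<notin> S l" using no_double[OF ne a q lS] .
  have ql: "q \<noteq> l" using lq irr by auto
  have Sl: "S l = {}"
  proof -
    have "p \<notin> S l" for p
    proof
      assume p: "p \<in> S l"
      then have "p \<in> V" using val l unfolding valid_profile_def by auto
      then have "A l p" using p l unfolding adj_def by auto
      then have "p = q" by (rule leaf)
      then show False using hnd p by simp
    qed
    then show ?thesis by auto
  qed
  have Sz: "z = q" if "z \<in> V" "l \<in> S z" for z
  proof -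
    have "A l z" using that l unfolding adj_def by auto
    then show ?thesis by (rule leaf)
  qed
  define T where "T = S q - {l}"
  define S' where "S' = S(q := T)"
  have T: "T \<subseteq> V - {q}" using val q unfolding T_def valid_profile_def by auto
  have c: "cost n w \<alpha> \<beta> S q \<le> cost n w \<alpha> \<beta> S' q" using NE_dev[OF ne q T] S'_def by simp
  have R'eq: "adj n S' x y \<longleftrightarrow> A x y \<and> x \<noteq> l \<and> y \<noteq> l" for x y
    unfolding adj_def S'_def T_def using Sl Sz ql by auto
  have dle: "gdist n S' q y \<le> gdist n S q y" if "y \<noteq> l" for y
    unfolding gdist_dst by (rule dst_LR[where R=A and l=l and q=q, OF adj_sym leaf]) (use R'eq ql that in auto)
  have sub: "{v\<in>V. gdist n S' q v > enat \<beta>} \<subseteq> insert l {v\<in>V. gdist n S q v > enat \<beta>}"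
    using dle by (auto dest: order_less_le_trans)
  have s1: "(\<Sum>v\<in>{v\<in>V. gdist n S' q v > enat \<beta>}. w v) \<le> w l + (\<Sum>v\<in>{v\<in>V. gdist n S q v > enat \<beta>}. w v)"
  proof -
    have "(\<Sum>v\<in>{v\<in>V. gdist n S' q v > enat \<beta>}. w v) \<le> (\<Sum>v\<in>insert l {v\<in>V. gdist n S q v > enat \<beta>}. w v)"
      by (rule sum_mono2) (use sub wpos l in auto)
    also have "\<dots> \<le> w l + (\<Sum>v\<in>{v\<in>V. gdist n S q v > enat \<beta>}. w v)"
      by (rule sum_insert_le) (use l in auto)
    finally show ?thesis .
  qed
  have cT: "card T = card (S q) - 1" unfolding T_def using lS finS[OF val q] by simp
  have c1: "card (S q) \<ge> 1" using lS finS[OF val q] by (metis One_nat_def Suc_leI card_gt_0_iff empty_iff)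
  show ?thesis using c s1 cT c1 unfolding cost_def S'_def by (simp add: of_nat_diff algebra_simps)
qed

lemma leaf_swap:
  assumes lq: "A l q" and leaf: "\<And>z. A l z \<Longrightarrow> z = q" and qS: "q \<in> S l"
    and x: "x \<in> V" "x \<noteq> l"
  shows "(\<Sum>y\<in>{y\<in>V. y \<noteq> l \<and> dd A q y \<ge> \<beta>}. w y) \<le> (\<Sum>y\<in>{y\<in>V. y \<noteq> l \<and> dd A x y \<ge> \<beta>}. w y)"
proof -
  have l: "l \<in> V" and q: "q \<in> V" using lq adj_inV by auto
  have hnd: "l \<notin> S q" using no_double[OF ne a l qS] .
  have Sz: "l \<notin> S z" if "z \<in> V" for z
  proof
    assume "l \<in> S z"
    then have "A l z" using that l unfolding adj_def by auto
    then have "z = q" by (rule leaf)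
    then show False using hnd \<open>l \<in> S z\<close> by simp
  qed
  have Sl: "S l = {q}"
  proof -
    have "p = q" if p: "p \<in> S l" for p
    proof -
      have "p \<in> V" using val l p unfolding valid_profile_def by auto
      then have "A l p" using p l unfolding adj_def by auto
      then show ?thesis by (rule leaf)
    qed
    then show ?thesis using qS by blast
  qed
  define S' where "S' = S(l := {x})"
  have T: "{x} \<subseteq> V - {l}" using x by auto
  have c: "cost n w \<alpha> \<beta> S l \<le> cost n w \<alpha> \<beta> S' l" using NE_dev[OF ne l T] S'_def by simp
  define R' where "R' a b = (A a b \<and> a \<noteq> l \<and> b \<noteq> l)" for a b
  have mono': "adj n S' a b" if "R' a b" for a b
    using that unfolding R'_def adj_def S'_def by auto
  have lx: "adj n S' l x" unfolding adj_def S'_def using l x by auto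
  have dle: "gdist n S' l y \<le> enat (Suc (dd A x y))" if y: "y \<in> V" "y \<noteq> l" for y
  proof -
    have 1: "gdist n S' l y \<le> eSuc (gdist n S' x y)" by (rule g_step[OF lx])
    have 2: "gdist n S' x y \<le> dst R' x y" unfolding gdist_dst by (rule dst_mono) (rule mono')
    have 3: "dst R' x y \<le> dst A x y"
      by (rule dst_LR[where R=A and l=l and q=q, OF adj_sym leaf]) (use R'_def x y in auto)
    have 4: "dst A x y = enat (dd A x y)" using gd[OF x(1) y(1)] gdist_dst by metis
    have "gdist n S' x y \<le> enat (dd A x y)" using 2 3 4 by simp
    then have "eSuc (gdist n S' x y) \<le> enat (Suc (dd A x y))" by (simp add: eSuc_enat[symmetric])
    then show ?thesis using 1 by simp
  qed
  have sub: "{v\<in>V. gdist n S' l v > enat \<beta>} \<subseteq> {y\<in>V. y \<noteq> l \<and> dd A x y \<ge> \<beta>}"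
  proof
    fix v assume "v \<in> {v\<in>V. gdist n S' l v > enat \<beta>}"
    then have v: "v \<in> V" "gdist n S' l v > enat \<beta>" by auto
    have vl: "v \<noteq> l" using v(2) gdist_dst[of n S' l l] by (auto simp: zero_enat_def)
    have "enat \<beta> < enat (Suc (dd A x v))" using v(2) dle[OF v(1) vl] by (metis order_less_le_trans)
    then show "v \<in> {y\<in>V. y \<noteq> l \<and> dd A x y \<ge> \<beta>}" using v vl by simp
  qed
  have farS: "{v\<in>V. gdist n S l v > enat \<beta>} = {y\<in>V. y \<noteq> l \<and> dd A q y \<ge> \<beta>}"
  proof -
    have "gdist n S l v > enat \<beta> \<longleftrightarrow> v \<noteq> l \<and> dd A q v \<ge> \<beta>" if v: "v \<in> V" for v
    proof (cases "v = l")
      case True then show ?thesis using gd[OF l l] by simp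
    next
      case False then show ?thesis using gd[OF l v] L1[OF lq leaf v False] by (simp add: less_Suc_eq_le)
    qed
    then show ?thesis by auto
  qed
  have s1: "(\<Sum>v\<in>{v\<in>V. gdist n S' l v > enat \<beta>}. w v) \<le> (\<Sum>y\<in>{y\<in>V. y \<noteq> l \<and> dd A x y \<ge> \<beta>}. w y)"
    by (rule sum_mono2) (use sub wpos in auto)
  show ?thesis using c s1 farS Sl unfolding cost_def S'_def by simp
qed

end

context game
begin

lemma dadj: "A x y \<Longrightarrow> dd A x y \<le> 1" by (rule dd_adj)

lemma caseA:
  assumes lq: "A l q" and leaf: "\<And>z. A l z \<Longrightarrow> z = q" and lS: "l \<in> S q"
    and b: "b \<in> V" and far: "dd A q b \<ge> \<beta> + 1"
  shows False
proof -
  have l: "l \<in> V" and q: "q \<in> V" using lq adj_inV by auto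
  have al: "\<alpha> \<le> w l" by (rule leaf_drop[OF lq leaf lS])
  have ql1: "dd A q l \<le> 1" using dadj adj_sym[OF lq] by blast
  have bl: "b \<noteq> l" using ql1 far b2 by auto
  have lb: "dd A l b = dd A q b + 1" by (rule L1[OF lq leaf b bl])
  have bq: "dd A b q = dd A q b" using dsym b q by simp
  have bl': "dd A b l = dd A l b" using dsym b l by simp
  have qb: "q \<noteq> b" using far b2 by auto
  have qnS: "q \<notin> S b"
  proof
    assume "q \<in> S b"
    then have "A b q" using b q unfolding adj_def by auto
    then show False using dadj bq far b2 by fastforce
  qed
  define F1 where "F1 = {v\<in>V. dd A b v > \<beta>}"
  define F2 where "F2 = {v\<in>V. dd A b v > \<beta> \<and> dd A q v \<ge> \<beta>}"
  have al2: "(\<Sum>v\<in>F1. w v) \<le> \<alpha> + (\<Sum>v\<in>F2. w v)"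
    unfolding F1_def F2_def by (rule add_link[OF b q qb qnS])
  have lF: "l \<in> F1" unfolding F1_def using l bl' lb far by simp
  have qF: "q \<in> F1" unfolding F1_def using q bq far by simp
  have lq': "l \<noteq> q" using lq irr by auto
  have sub: "F2 \<subseteq> F1 - {l, q}" unfolding F1_def F2_def using ql1 b2 by auto
  have finF1: "finite F1" unfolding F1_def by simp
  have "(\<Sum>v\<in>F1. w v) = (\<Sum>v\<in>F1 - {l, q}. w v) + (\<Sum>v\<in>{l, q}. w v)"
    using lF qF finF1 by (intro sum.subset_diff) auto
  also have "(\<Sum>v\<in>{l, q}. w v) = w l + w q" using lq' by simp
  finally have e: "(\<Sum>v\<in>F1. w v) = (\<Sum>v\<in>F1 - {l, q}. w v) + w l + w q" by simp
  have "(\<Sum>v\<in>F2. w v) \<le> (\<Sum>v\<in>F1 - {l, q}. w v)"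
    by (rule sum_mono2) (use finF1 sub wpos F1_def in auto)
  then have "w q \<le> 0" using e al2 al by linarith
  then show False using pos q by force
qed

lemma leaf_of_far:
  assumes u: "u \<in> V" and v: "v \<in> V" and uv: "u \<noteq> v"
    and mx: "\<And>x y. x \<in> V \<Longrightarrow> y \<in> V \<Longrightarrow> dd A x y \<le> dd A u v"
  shows "\<exists>q. A v q \<and> (\<forall>z. A v z \<longrightarrow> z = q)"
proof -
  have "dd A v u \<noteq> 0" using d0[OF v u] uv by simp
  then obtain m where "dd A v u = Suc m" by (cases "dd A v u") auto
  then obtain q where vq: "A v q" using dSuc[OF v u] by blast
  have "z = q" if vz: "A v z" for z
  proof -
    have zV: "z \<in> V" using vz adj_inV by auto
    have "dd A u z \<le> dd A u v" using mx[OF u zV] .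
    then have "\<forall>q'. A v q' \<and> dd A u q' \<le> dd A u v \<longrightarrow> q' = z" using P[OF u vz] by blast
    moreover have "dd A u q \<le> dd A u v" using mx[OF u] vq adj_inV by blast
    ultimately show ?thesis using vq by blast
  qed
  then show ?thesis using vq by blast
qed

lemma diam: "x \<in> V \<Longrightarrow> y \<in> V \<Longrightarrow> dd A x y \<le> \<beta> + 1"
proof (rule ccontr)
  assume x: "x \<in> V" and y: "y \<in> V" and nle: "\<not> dd A x y \<le> \<beta> + 1"
  define Ds where "Ds = (\<lambda>(x, y). dd A x y) ` (V \<times> V)"
  have finD: "finite Ds" unfolding Ds_def by simp
  have neD: "Ds \<noteq> {}" unfolding Ds_def using x y by auto
  define M where "M = Max Ds"
  obtain a b where ab: "a \<in> V" "b \<in> V" "dd A a b = M"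
    using Max_in[OF finD neD] unfolding M_def Ds_def by auto
  have mx: "dd A x' y' \<le> M" if "x' \<in> V" "y' \<in> V" for x' y'
  proof -
    have "dd A x' y' \<in> Ds" unfolding Ds_def using that by force
    then show ?thesis using Max_ge[OF finD] unfolding M_def by blast
  qed
  have Mb: "M \<ge> \<beta> + 2" using mx[OF x y] nle by simp
  have abne: "a \<noteq> b" using ab Mb by auto
  have ba: "dd A b a = M" using dsym ab by simp
  obtain qb where bq: "A b qb" and leafb: "\<And>z. A b z \<Longrightarrow> z = qb"
    using leaf_of_far[OF ab(1) ab(2) abne] mx ab(3) by metis
  obtain qa where aq: "A a qa" and leafa: "\<And>z. A a z \<Longrightarrow> z = qa"
    using leaf_of_far[OF ab(2) ab(1) abne[symmetric]] mx ba by metis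
  have qaV: "qa \<in> V" and qbV: "qb \<in> V" using aq bq adj_inV by auto
  have da: "dd A a b = dd A qa b + 1" by (rule L1[OF aq leafa ab(2) abne[symmetric]])
  have db: "dd A b a = dd A qb a + 1" by (rule L1[OF bq leafb ab(1) abne])
  have fa: "dd A qa b \<ge> \<beta> + 1" using da ab(3) Mb by simp
  have fb: "dd A qb a \<ge> \<beta> + 1" using db ba Mb by simp
  have "a \<in> S qa \<or> qa \<in> S a" using aq unfolding adj_def by auto
  moreover have "b \<in> S qb \<or> qb \<in> S b" using bq unfolding adj_def by auto
  moreover have "\<not> a \<in> S qa" using caseA[OF aq leafa _ ab(2) fa] by blast
  moreover have "\<not> b \<in> S qb" using caseA[OF bq leafb _ ab(1) fb] by blast
  ultimately have own: "qa \<in> S a" "qb \<in> S b" by auto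
  have qba: "qb \<noteq> a" using fb b2 by auto
  have qab: "qa \<noteq> b" using fa b2 by auto
  have s1: "(\<Sum>y\<in>{y\<in>V. y \<noteq> a \<and> dd A qa y \<ge> \<beta>}. w y) \<le> (\<Sum>y\<in>{y\<in>V. y \<noteq> a \<and> dd A qb y \<ge> \<beta>}. w y)"
    by (rule leaf_swap[OF aq leafa own(1) qbV qba])
  have s2: "(\<Sum>y\<in>{y\<in>V. y \<noteq> b \<and> dd A qb y \<ge> \<beta>}. w y) \<le> (\<Sum>y\<in>{y\<in>V. y \<noteq> b \<and> dd A qa y \<ge> \<beta>}. w y)"
    by (rule leaf_swap[OF bq leafb own(2) qaV qab])
  define Pa where "Pa = {y\<in>V. dd A qa y \<ge> \<beta>}"
  define Qb where "Qb = {y\<in>V. dd A qb y \<ge> \<beta>}"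
  have qaa: "dd A qa a \<le> 1" using dadj adj_sym[OF aq] by blast
  have qbb: "dd A qb b \<le> 1" using dadj adj_sym[OF bq] by blast
  have e1: "{y\<in>V. y \<noteq> a \<and> dd A qa y \<ge> \<beta>} = Pa" unfolding Pa_def using qaa b2 by auto
  have e2: "{y\<in>V. y \<noteq> a \<and> dd A qb y \<ge> \<beta>} = Qb - {a}" unfolding Qb_def by auto
  have e3: "{y\<in>V. y \<noteq> b \<and> dd A qb y \<ge> \<beta>} = Qb" unfolding Qb_def using qbb b2 by auto
  have e4: "{y\<in>V. y \<noteq> b \<and> dd A qa y \<ge> \<beta>} = Pa - {b}" unfolding Pa_def by auto
  have aQ: "a \<in> Qb" unfolding Qb_def using ab(1) fb by simp
  have bP: "b \<in> Pa" unfolding Pa_def using ab(2) fa by simp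
  have finP: "finite Pa" and finQ: "finite Qb" unfolding Pa_def Qb_def by auto
  have "(\<Sum>y\<in>Pa. w y) \<le> (\<Sum>y\<in>Qb. w y) - w a"
    using s1 e1 e2 sum_diff1[OF finQ, of w a] aQ by simp
  moreover have "(\<Sum>y\<in>Qb. w y) \<le> (\<Sum>y\<in>Pa. w y) - w b"
    using s2 e3 e4 sum_diff1[OF finP, of w b] bP by simp
  moreover have "w a > 0" "w b > 0" using pos ab by auto
  ultimately show False by linarith
qed


lemma far_le:
  assumes u: "u \<in> V"
  shows "(\<Sum>v\<in>{v\<in>V. dd A u v > \<beta>}. w v) \<le> \<alpha>"
proof (cases "{v\<in>V. dd A u v > \<beta>} = {}")
  case True
  then have "(\<Sum>v\<in>{v\<in>V. dd A u v > \<beta>}. w v) = 0" by (simp only: True sum.empty)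
  then show ?thesis using a by simp
next
  case False
  then obtain y where y: "y \<in> V" "dd A u y > \<beta>" by auto
  have uy: "dd A u y = Suc \<beta>" using diam[OF u y(1)] y(2) by simp
  obtain p where up: "A u p" and py: "dd A p y = \<beta>" using dSuc[OF u y(1) uy] by blast
  have pV: "p \<in> V" using up adj_inV by auto
  obtain b' where bb: "\<beta> = Suc b'" using b2 by (cases \<beta>) auto
  obtain x where px: "A p x" and xy: "dd A x y = \<beta> - 1" using dSuc[OF pV y(1)] py bb by auto
  have xV: "x \<in> V" using px adj_inV by auto
  have xu: "x \<noteq> u" using xy uy by auto
  have xS: "x \<notin> S u"
  proof
    assume "x \<in> S u"
    then have "A u x" using u xV unfolding adj_def by auto
    then have "dd A u y \<le> dd A x y + 1" using dstep y(1) by blast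
    then show False using uy xy b2 by simp
  qed
  have cl: "dd A x y' < \<beta>" if y': "y' \<in> V" "dd A u y' > \<beta>" for y'
  proof -
    have uy': "dd A y' u = \<beta> + 1" using diam[OF u y'(1)] y'(2) dsym[OF u y'(1)] by simp
    have "dd A y' p + 1 = dd A y' u \<or> dd A y' u + 1 = dd A y' p" using P1[OF y'(1) up] .
    moreover have "dd A y' u + 1 \<noteq> dd A y' p"
    proof
      assume h: "dd A y' u + 1 = dd A y' p"
      have "dd A y' y = dd A y' u + dd A u y"
        by (rule G[OF y'(1) up h[symmetric] y(1)]) (use uy py in simp)
      then show False using diam[OF y'(1) y(1)] uy uy' by simp
    qed
    ultimately have y'p: "dd A y' p = \<beta>" using uy' by simp
    have "dd A y' x + 1 = dd A y' p \<or> dd A y' p + 1 = dd A y' x" using P1[OF y'(1) px] .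
    moreover have "dd A y' p + 1 \<noteq> dd A y' x"
    proof
      assume h: "dd A y' p + 1 = dd A y' x"
      have "dd A y' y = dd A y' p + dd A p y"
        by (rule G[OF y'(1) px h[symmetric] y(1)]) (use py xy bb in simp)
      then show False using diam[OF y'(1) y(1)] y'p py b2 by simp
    qed
    ultimately have "dd A y' x + 1 = \<beta>" using y'p by simp
    then show ?thesis using dsym[OF xV y'(1)] by simp
  qed
  have "(\<Sum>v\<in>{v\<in>V. dd A u v > \<beta>}. w v) \<le> \<alpha> + (\<Sum>v\<in>{v\<in>V. dd A u v > \<beta> \<and> dd A x v \<ge> \<beta>}. w v)"
    by (rule add_link[OF u xV xu xS])
  moreover have "{v\<in>V. dd A u v > \<beta> \<and> dd A x v \<ge> \<beta>} = {}" using cl by fastforce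
  ultimately show ?thesis by simp
qed

lemma center: assumes n1: "n \<ge> 1" shows "\<exists>z\<in>V. {v\<in>V. dd A z v > \<beta>} = {}"
proof (cases "\<forall>x\<in>V. \<forall>y\<in>V. dd A x y \<le> \<beta>")
  case True
  have "1 \<in> V" using n1 unfolding players_def by simp
  moreover have "{v\<in>V. dd A 1 v > \<beta>} = {}" using True \<open>1 \<in> V\<close> by force
  ultimately show ?thesis by blast
next
  case False
  then obtain a0 b0 where ab: "a0 \<in> V" "b0 \<in> V" "dd A a0 b0 > \<beta>" by (auto simp: not_le)
  have abd: "dd A a0 b0 = Suc \<beta>" using diam[OF ab(1,2)] ab(3) by simp
  obtain z where az: "A a0 z" and zb: "dd A z b0 = \<beta>" using dSuc[OF ab(1,2) abd] by blast
  have zV: "z \<in> V" using az adj_inV by auto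
  have "\<not> dd A z y > \<beta>" if y: "y \<in> V" for y
  proof
    assume zy: "dd A z y > \<beta>"
    have yz: "dd A y z = \<beta> + 1" using diam[OF zV y] zy dsym[OF zV y] by simp
    have "dd A y z + 1 = dd A y a0 \<or> dd A y a0 + 1 = dd A y z" using P1[OF y az] .
    moreover have "dd A y z + 1 \<noteq> dd A y a0" using diam[OF y ab(1)] yz by simp
    ultimately have h: "dd A y a0 + 1 = dd A y z" by simp
    have "dd A y b0 = dd A y a0 + dd A a0 b0"
      by (rule G[OF y az h[symmetric] ab(2)]) (use abd zb in simp)
    then show False using diam[OF y ab(2)] abd yz h b2 by simp
  qed
  then show ?thesis using zV by blast
qed

lemma F_le: assumes n1: "n \<ge> 1" shows "(\<Sum>u\<in>V. \<Sum>v\<in>{v\<in>V. gdist n S u v > enat \<beta>}. w v) \<le> \<alpha> * (real n - 1)"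
proof -
  have eq: "{v\<in>V. gdist n S u v > enat \<beta>} = {v\<in>V. dd A u v > \<beta>}" if "u \<in> V" for u
    using gd[OF that] by auto
  obtain z where z: "z \<in> V" "{v\<in>V. dd A z v > \<beta>} = {}" using center[OF n1] by blast
  have "(\<Sum>u\<in>V. \<Sum>v\<in>{v\<in>V. gdist n S u v > enat \<beta>}. w v) = (\<Sum>u\<in>V. \<Sum>v\<in>{v\<in>V. dd A u v > \<beta>}. w v)"
    using eq by (intro sum.cong) auto
  also have "\<dots> = (\<Sum>v\<in>{v\<in>V. dd A z v > \<beta>}. w v) + (\<Sum>u\<in>V - {z}. \<Sum>v\<in>{v\<in>V. dd A u v > \<beta>}. w v)"
    using z(1) by (simp add: sum.remove)
  also have "\<dots> = (\<Sum>u\<in>V - {z}. \<Sum>v\<in>{v\<in>V. dd A u v > \<beta>}. w v)" by (simp only: z(2) sum.empty add_0_left)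
  also have "\<dots> \<le> real (card (V - {z})) * \<alpha>"
    by (rule sum_bounded_above) (use far_le in auto)
  also have "\<dots> = \<alpha> * (real n - 1)" using z(1) n1 by (simp add: of_nat_diff)
  finally show ?thesis .
qed

end


theorem theorem4:
  fixes n :: nat and w :: "nat \<Rightarrow> real" and \<alpha> :: real and \<beta> :: nat
    and S :: "nat \<Rightarrow> nat set"
  assumes "\<forall>u\<in>players n. w u > 0"
    and "\<alpha> > 0"
    and "1 \<le> \<beta>" and "\<beta> \<le> n - 1"
    and "star_celebrity_game n w \<alpha> \<beta>"
    and "\<beta> > 1"
    and "is_NE n w \<alpha> \<beta> S"
    and "is_tree n S"
  shows "social_cost n w \<alpha> \<beta> S \<le> 2 * opt n w \<alpha> \<beta>"
proof -
  have b2: "\<beta> \<ge> 2" using assms(6) by simp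
  have n3: "n \<ge> 3" using assms(4) b2 by linarith
  interpret game n w \<alpha> \<beta> S using assms b2 by unfold_locales auto
  have L: "(\<Sum>u\<in>players n. card (S u)) = n - 1"
    using sum_links_eq[OF ne a] tr unfolding is_tree_def by simp
  have sc: "social_cost n w \<alpha> \<beta> S = \<alpha> * real (\<Sum>u\<in>players n. card (S u))
      + (\<Sum>u\<in>players n. \<Sum>v\<in>{v\<in>players n. gdist n S u v > enat \<beta>}. w v)"
    unfolding social_cost_def cost_def by (simp add: sum.distrib sum_distrib_left)
  have up: "social_cost n w \<alpha> \<beta> S \<le> 2 * (\<alpha> * (real n - 1))"
    using sc L F_le n3 by (simp add: of_nat_diff)
  obtain u where u: "u \<in> players n" "S u \<noteq> {}"
  proof (rule ccontr)
    assume "\<not> thesis"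
    then have "\<forall>u\<in>players n. S u = {}" using that by blast
    then have "(\<Sum>u\<in>players n. card (S u)) = 0" by simp
    then show False using L n3 by simp
  qed
  then obtain v where v: "v \<in> S u" by blast
  have aW: "\<alpha> \<le> (\<Sum>x\<in>players n. w x)" by (rule alpha_le_W[OF ne pos u(1) v])
  have "\<alpha> * (real n - 1) \<le> opt n w \<alpha> \<beta>"
    by (rule opt_ge) (rule lower_sc[OF _ pos aW], use a in auto)
  then show ?thesis using up by simp
qed

end
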